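(* Let $\beta$ be irrational with continued fraction denominators $(q'_n)_{n\ge1}$. Let $f:\mathbb{T}\to\mathbb{R}$ be real analytic and not a trigonometric polynomial, with Fourier coefficients $a_k$, and let $(l_k)_{k\ge1}$ be a strictly increasing sequence of positive integers with $a_{l_k}\neq0$ and $|a_{l_k}|/T_{l_k}\to\infty$, where $T_n=\sum_{j\ge2}|a_{jn}|\,|jn|$. For $k\ge1$ let $\eta(k)$ be the smallest integer with $q'_{\eta(k)}>2k^2/|a_{l_k}|^2$. For $n,m\ge1$ let $V_{n,m}=\{\alpha\in\mathbb{R}\setminus\mathbb{Q}: q_n(\alpha)=l_m \text{ and } q_{n+1}(\alpha)>2q'_{\eta(m)}n^2\}$, and $\mathcal{U}_j=\bigcup_{n\ge1}V_{n,j}$. Then for every $M\ge1$ the set $\bigcup_{j\ge M}\mathcal{U}_j$ is dense in $\mathbb{R}$.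
   Context: For an irrational $\gamma=[c_0;c_1,c_2,\dots]$, its continued fraction denominators are $q_0=1$, $q_1=c_1$, $q_n=c_nq_{n-1}+q_{n-2}$; $q_n(\gamma)$ denotes the $n$-th one. $\mathbb{T}=\mathbb{R}/\mathbb{Z}$. *)

theory Defs
  imports "HOL-Analysis.Analysis"
begin

fun cf_rem :: "real \<Rightarrow> nat \<Rightarrow> real" where
  "cf_rem x 0 = x"
| "cf_rem x (Suc n) = 1 / frac (cf_rem x n)"

definition cf_digit :: "real \<Rightarrow> nat \<Rightarrow> int" where
  "cf_digit x n = \<lfloor>cf_rem x n\<rfloor>"

fun cf_den :: "real \<Rightarrow> nat \<Rightarrow> int" where
  "cf_den x 0 = 1"
| "cf_den x (Suc 0) = cf_digit x 1"
| "cf_den x (Suc (Suc n)) = cf_digit x (Suc (Suc n)) * cf_den x (Suc n) + cf_den x n"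

definition real_analytic :: "(real \<Rightarrow> real) \<Rightarrow> bool" where
  "real_analytic f \<longleftrightarrow> (\<forall>x. \<exists>r>0. \<exists>c::nat \<Rightarrow> real.
      \<forall>y. \<bar>y - x\<bar> < r \<longrightarrow> (\<lambda>n. c n * (y - x) ^ n) sums f y)"

text \<open>Functions on T = R/Z are represented as 1-periodic functions on R.\<close>
definition periodic1 :: "(real \<Rightarrow> real) \<Rightarrow> bool" where
  "periodic1 f \<longleftrightarrow> (\<forall>x. f (x + 1) = f x)"

definition fourier_coeff :: "(real \<Rightarrow> real) \<Rightarrow> int \<Rightarrow> complex" where
  "fourier_coeff f k = integral {0..1} (\<lambda>x. complex_of_real (f x) * cis (- 2 * pi * of_int k * x))"

definition trig_poly :: "(real \<Rightarrow> real) \<Rightarrow> bool" where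
  "trig_poly f \<longleftrightarrow> (\<exists>N::nat. \<forall>k::int. \<bar>k\<bar> > int N \<longrightarrow> fourier_coeff f k = 0)"

definition T_sum :: "(real \<Rightarrow> real) \<Rightarrow> nat \<Rightarrow> real" where
  "T_sum f n = (\<Sum>i. norm (fourier_coeff f (int ((i + 2) * n))) * real ((i + 2) * n))"

definition eta :: "real \<Rightarrow> (real \<Rightarrow> real) \<Rightarrow> (nat \<Rightarrow> nat) \<Rightarrow> nat \<Rightarrow> nat" where
  "eta \<beta> f l k = (LEAST n. n \<ge> 1 \<and>
      real_of_int (cf_den \<beta> n) > 2 * (real k)^2 / (norm (fourier_coeff f (int (l k))))^2)"

definition V_set :: "real \<Rightarrow> (real \<Rightarrow> real) \<Rightarrow> (nat \<Rightarrow> nat) \<Rightarrow> nat \<Rightarrow> nat \<Rightarrow> real set" where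
  "V_set \<beta> f l n m = {\<alpha>. \<alpha> \<notin> \<rat> \<and> cf_den \<alpha> n = int (l m) \<and>
      real_of_int (cf_den \<alpha> (Suc n)) > 2 * real_of_int (cf_den \<beta> (eta \<beta> f l m)) * (real n)^2}"

definition U_set :: "real \<Rightarrow> (real \<Rightarrow> real) \<Rightarrow> (nat \<Rightarrow> nat) \<Rightarrow> nat \<Rightarrow> real set" where
  "U_set \<beta> f l j = (\<Union>n\<in>{1..}. V_set \<beta> f l n j)"

end

theory Submission
  imports Defs "HOL-Computational_Algebra.Primes"
begin


lemma exists_irr: "\<exists>x::real. x \<notin> \<rat>"
  using countable_rat uncountable_UNIV_real by (metis UNIV_eq_I)

fun cf_num :: "real \<Rightarrow> nat \<Rightarrow> int" where
  "cf_num x 0 = cf_digit x 0"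
| "cf_num x (Suc 0) = cf_digit x 1 * cf_digit x 0 + 1"
| "cf_num x (Suc (Suc n)) = cf_digit x (Suc (Suc n)) * cf_num x (Suc n) + cf_num x n"

lemma rem_shift:
  assumes "\<beta> > 1"
  shows "cf_rem (of_int a + 1 / \<beta>) (Suc k) = cf_rem \<beta> k"
proof (induction k)
  case 0
  have "frac (of_int a + 1 / \<beta>) = 1 / \<beta>"
    using assms by (simp add: frac_eq)
  then show ?case by simp
next
  case (Suc k)
  then show ?case by simp
qed

lemma digit_shift:
  assumes "\<beta> > 1"
  shows "cf_digit (of_int a + 1 / \<beta>) (Suc k) = cf_digit \<beta> k"
    and "cf_digit (of_int a + 1 / \<beta>) 0 = a"
proof -
  show "cf_digit (of_int a + 1 / \<beta>) (Suc k) = cf_digit \<beta> k"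
    unfolding cf_digit_def using rem_shift[OF assms] by simp
  have "0 < 1/\<beta>" "1/\<beta> < 1" using assms by auto
  then show "cf_digit (of_int a + 1 / \<beta>) 0 = a"
    unfolding cf_digit_def by (simp add: floor_eq_iff)
qed

lemma den_num_shift:
  assumes "\<beta> > 1"
  shows "(cf_den (of_int a + 1 / \<beta>) (Suc n) = cf_num \<beta> n \<and> cf_num (of_int a + 1 / \<beta>) (Suc n) = a * cf_num \<beta> n + cf_den \<beta> n)
       \<and> (cf_den (of_int a + 1 / \<beta>) (Suc (Suc n)) = cf_num \<beta> (Suc n) \<and> cf_num (of_int a + 1 / \<beta>) (Suc (Suc n)) = a * cf_num \<beta> (Suc n) + cf_den \<beta> (Suc n))"
proof (induction n)
  case 0
  note d = digit_shift(1)[OF assms(1), where a=a] and d0 = digit_shift(2)[OF assms(1), where a=a]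
  show ?case using d[of 0] d[of 1] d0 by (simp add: algebra_simps)
next
  case (Suc n)
  let ?x = "of_int a + 1 / \<beta>"
  have d: "cf_digit ?x (Suc (Suc (Suc n))) = cf_digit \<beta> (Suc (Suc n))"
    using digit_shift(1)[OF assms(1), where a=a] by blast
  from Suc.IH have e1: "cf_den ?x (Suc n) = cf_num \<beta> n"
    and e2: "cf_num ?x (Suc n) = a * cf_num \<beta> n + cf_den \<beta> n"
    and e3: "cf_den ?x (Suc (Suc n)) = cf_num \<beta> (Suc n)"
    and e4: "cf_num ?x (Suc (Suc n)) = a * cf_num \<beta> (Suc n) + cf_den \<beta> (Suc n)" by auto
  have "cf_den ?x (Suc (Suc (Suc n))) = cf_digit ?x (Suc (Suc (Suc n))) * cf_den ?x (Suc (Suc n)) + cf_den ?x (Suc n)"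
    by (simp only: cf_den.simps)
  also have "\<dots> = cf_num \<beta> (Suc (Suc n))" by (simp only: d e1 e3 cf_num.simps)
  finally have f1: "cf_den ?x (Suc (Suc (Suc n))) = cf_num \<beta> (Suc (Suc n))" .
  have "cf_num ?x (Suc (Suc (Suc n))) = cf_digit ?x (Suc (Suc (Suc n))) * cf_num ?x (Suc (Suc n)) + cf_num ?x (Suc n)"
    by (simp only: cf_num.simps)
  also have "\<dots> = a * cf_num \<beta> (Suc (Suc n)) + cf_den \<beta> (Suc (Suc n))"
  proof -
    have "cf_digit ?x (Suc (Suc (Suc n))) * cf_num ?x (Suc (Suc n)) + cf_num ?x (Suc n)
       = a * (cf_digit \<beta> (Suc (Suc n)) * cf_num \<beta> (Suc n) + cf_num \<beta> n)
         + (cf_digit \<beta> (Suc (Suc n)) * cf_den \<beta> (Suc n) + cf_den \<beta> n)"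
      by (simp only: d e2 e4) (simp add: algebra_simps)
    also have "\<dots> = a * cf_num \<beta> (Suc (Suc n)) + cf_den \<beta> (Suc (Suc n))" by simp
    finally show ?thesis .
  qed
  finally show ?case using f1 e3 e4 by simp
qed

lemma rem_int_shift: "cf_rem (x + of_int k) (Suc n) = cf_rem x (Suc n)"
  by (induction n) auto

lemma den_int_shift: "cf_den (x + of_int k) n = cf_den x n"
proof (induction x n rule: cf_den.induct)
  case (1 x) then show ?case by simp
next
  case (2 x) then show ?case by (simp add: cf_digit_def rem_int_shift[where n=0, simplified])
next
  case (3 x n) then show ?case
    using rem_int_shift[of x k "Suc n"] by (simp add: cf_digit_def)
qed

lemma irr_shift: "\<beta> \<notin> \<rat> \<Longrightarrow> of_int a + 1 / \<beta> \<notin> \<rat>"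
proof
  assume "\<beta> \<notin> \<rat>" "of_int a + 1 / \<beta> \<in> \<rat>"
  then have "1 / \<beta> \<in> \<rat>" by (metis Rats_diff Rats_of_int add_diff_cancel_left')
  then have "\<beta> \<in> \<rat>" by (metis Rats_inverse inverse_eq_divide inverse_inverse_eq)
  with \<open>\<beta> \<notin> \<rat>\<close> show False by simp
qed

lemma irr_large: "\<exists>t::real. t \<notin> \<rat> \<and> t > X"
proof -
  obtain x :: real where x: "x \<notin> \<rat>" using exists_irr by blast
  define k where "k = \<lceil>X - x\<rceil> + 1"
  have "x + of_int k \<notin> \<rat>"
    using x by (metis Rats_diff Rats_of_int add_diff_cancel_right')
  moreover have "x + of_int k > X" unfolding k_def by linarith
  ultimately show ?thesis by blast
qed

lemma C_lemma:
  fixes p q :: int and B :: "nat \<Rightarrow> real" and \<delta> :: real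
  assumes "coprime p q" "1 \<le> q" "q \<le> p" "0 < \<delta>"
  shows "\<exists>\<alpha> n. \<alpha> \<notin> \<rat> \<and> cf_den \<alpha> n = q \<and> cf_num \<alpha> n = p
     \<and> of_int (cf_den \<alpha> (Suc n)) > B n \<and> of_int (cf_num \<alpha> (Suc n)) > B n
     \<and> \<bar>\<alpha> - p / q\<bar> < \<delta>"
  using assms
proof (induction "nat q" arbitrary: p q B \<delta> rule: less_induct)
  case less
  show ?case
  proof (cases "q = 1")
    case True
    obtain t :: real where t: "t \<notin> \<rat>" "t > max (max (B 0) (1/\<delta>)) 1 + 1"
      using irr_large by blast
    have t1: "t > 1" using t by simp
    let ?x = "of_int p + 1 / t"
    note sh = den_num_shift[OF t1, of p 0]
    have d0: "cf_digit ?x 0 = p" using digit_shift(2)[OF t1] by blast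
    have ft: "of_int \<lfloor>t\<rfloor> > B 0" "\<lfloor>t\<rfloor> \<ge> 1" using t by linarith+
    have "p \<ge> 1" using less True by simp
    have e: "cf_den ?x (Suc 0) = cf_num t 0" "cf_num ?x (Suc 0) = p * cf_num t 0 + cf_den t 0"
      using sh by blast+
    have nt: "cf_num t 0 = \<lfloor>t\<rfloor>" by (simp only: cf_num.simps cf_digit_def cf_rem.simps)
    have "of_int (cf_den ?x (Suc 0)) > B 0" using e nt ft by simp
    moreover have "of_int (cf_num ?x (Suc 0)) > B 0"
    proof -
      have "cf_num ?x (Suc 0) = p * \<lfloor>t\<rfloor> + 1" using e nt by simp
      moreover have "p * \<lfloor>t\<rfloor> \<ge> \<lfloor>t\<rfloor>" using \<open>p \<ge> 1\<close> ft(2) by simp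
      ultimately show ?thesis using ft by linarith
    qed
    moreover have "?x \<notin> \<rat>" using irr_shift t by blast
    moreover have "cf_num ?x 0 = p" using d0 by simp
    moreover have "\<bar>?x - p / q\<bar> < \<delta>"
    proof -
      have "1 / t < \<delta>" using t less(5)
        by (smt (verit, best) divide_less_eq max.strict_boundedE mult.commute pos_divide_less_eq)
      then show ?thesis using True t1 by simp
    qed
    ultimately show ?thesis using True by (intro exI[of _ ?x] exI[of _ 0]) auto
  next
    case False
    then have q2: "q \<ge> 2" using less by simp
    define r where "r = p mod q"
    define a where "a = p div q"
    have pr: "p = a * q + r" unfolding a_def r_def by simp
    have r0: "r \<noteq> 0"
    proof
      assume "r = 0"
      then have "q dvd p" unfolding r_def by auto
      then have "is_unit q" using less(2) coprime_absorb_left[of q p] by (simp add: coprime_commute)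
      then show False using q2 by simp
    qed
    have rq: "0 < r" "r < q" using r0 q2 unfolding r_def
      by (simp_all add: order_le_neq_trans)
    have a1: "a \<ge> 1"
    proof -
      have "q div q \<le> p div q" by (rule zdiv_mono1) (use less q2 in auto)
      then show ?thesis unfolding a_def using q2 by simp
    qed
    have cop: "coprime q r" using less(2) q2 unfolding r_def
      by (simp add: coprime_commute)
    define \<delta>' where "\<delta>' = min \<delta> ((q - r) / r)"
    have dp: "\<delta>' > 0" unfolding \<delta>'_def using less(5) rq by simp
    define B' where "B' = (\<lambda>n. max 0 (B (Suc n)))"
    have ih: "\<exists>\<alpha> n. \<alpha> \<notin> \<rat> \<and> cf_den \<alpha> n = r \<and> cf_num \<alpha> n = q
     \<and> of_int (cf_den \<alpha> (Suc n)) > B' n \<and> of_int (cf_num \<alpha> (Suc n)) > B' n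
     \<and> \<bar>\<alpha> - q / r\<bar> < \<delta>'"
      using less(1)[of "nat r"] cop rq dp by (simp add: coprime_commute)
    then obtain \<beta> n where b: "\<beta> \<notin> \<rat>" "cf_den \<beta> n = r" "cf_num \<beta> n = q"
       "of_int (cf_den \<beta> (Suc n)) > B' n" "of_int (cf_num \<beta> (Suc n)) > B' n"
       "\<bar>\<beta> - q / r\<bar> < \<delta>'"
      by blast
    have b1: "\<beta> > 1"
    proof -
      have "\<beta> > q / r - (q - r) / r" using b(6) unfolding \<delta>'_def by linarith
      also have "q / r - (q - r) / r = 1" using rq by (simp add: field_simps)
      finally show ?thesis .
    qed
    let ?x = "of_int a + 1 / \<beta>"
    note sh = den_num_shift[OF b1, of a n]
    have g1: "cf_den ?x (Suc n) = q" "cf_num ?x (Suc n) = p"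
      using sh b pr by (simp_all add: algebra_simps)
    have g2: "of_int (cf_den ?x (Suc (Suc n))) > B (Suc n)"
    proof -
      have "cf_den ?x (Suc (Suc n)) = cf_num \<beta> (Suc n)" using sh by blast
      then show ?thesis using b(5) unfolding B'_def by simp
    qed
    have g3: "of_int (cf_num ?x (Suc (Suc n))) > B (Suc n)"
    proof -
      have "cf_num ?x (Suc (Suc n)) = a * cf_num \<beta> (Suc n) + cf_den \<beta> (Suc n)" using sh by blast
      moreover have "cf_num \<beta> (Suc n) \<ge> 0" "cf_den \<beta> (Suc n) \<ge> 0"
        using b(4,5) unfolding B'_def by (smt (verit) of_int_less_0_iff)+
      moreover have "a * cf_num \<beta> (Suc n) \<ge> cf_num \<beta> (Suc n)" using a1 calculation(2)
        by (simp add: mult_le_cancel_right1)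
      ultimately have "cf_num ?x (Suc (Suc n)) \<ge> cf_num \<beta> (Suc n)" by linarith
      then show ?thesis using b(5) unfolding B'_def by (smt (verit) of_int_le_iff)
    qed
    have g4: "\<bar>?x - p / q\<bar> < \<delta>"
    proof -
      have "p / q = a + r / q" using pr q2 by (simp add: field_simps)
      then have "?x - p / q = 1 / \<beta> - r / q" by simp
      also have "\<dots> = (r / (\<beta> * q)) * (q / r - \<beta>)" using rq b1 by (simp add: field_simps)
      finally have "\<bar>?x - p / q\<bar> = \<bar>r / (\<beta> * q)\<bar> * \<bar>\<beta> - q / r\<bar>"
        by (simp add: abs_mult abs_minus_commute)
      moreover have "\<bar>r / (\<beta> * q)\<bar> \<le> 1"
      proof -
        have "real_of_int r \<le> of_int q" using rq by simp
        also have "of_int q \<le> \<beta> * of_int q" using rq b1 by simp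
        finally show ?thesis using rq b1 by (simp add: divide_le_eq)
      qed
      ultimately have "\<bar>?x - p / q\<bar> \<le> \<bar>\<beta> - q / r\<bar>"
        using mult_right_mono[of "\<bar>r / (\<beta> * q)\<bar>" 1 "\<bar>\<beta> - q / r\<bar>"] by simp
      then show ?thesis using b(6) unfolding \<delta>'_def by linarith
    qed
    show ?thesis using g1 g2 g3 g4 irr_shift[OF b(1)] by blast
  qed
qed



definition cset :: "nat set \<Rightarrow> real \<Rightarrow> real \<Rightarrow> int set" where
  "cset S a b = {n::int. a < of_int n \<and> of_int n \<le> b \<and> (\<forall>p\<in>S. \<not> int p dvd n)}"

lemma cset_finite: "finite (cset S a b)"
proof -
  have "cset S a b \<subseteq> {\<lfloor>a\<rfloor>+1..\<lfloor>b\<rfloor>}" unfolding cset_def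
    by (auto simp: floor_less_iff le_floor_iff) (meson floor_less_iff le_floor_iff less_eq_int_code(1) zless_imp_add1_zle)+
  then show ?thesis using finite_subset by blast
qed

lemma cset_empty: "a \<le> b \<Longrightarrow> \<bar>real (card (cset {} a b)) - (b - a)\<bar> \<le> 1"
proof -
  assume ab: "a \<le> b"
  have "cset {} a b = {\<lfloor>a\<rfloor>+1..\<lfloor>b\<rfloor>}" unfolding cset_def
    by (auto simp: floor_less_iff le_floor_iff) (metis floor_less_iff zless_imp_add1_zle add1_zle_eq floor_less_iff)+
  then have "real (card (cset {} a b)) = of_int (\<lfloor>b\<rfloor> - \<lfloor>a\<rfloor>)"
    using ab floor_mono[OF ab] by simp
  then show ?thesis by linarith
qed

lemma cset_insert:
  assumes "prime p" "p \<notin> S" "\<forall>s\<in>S. prime s"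
  shows "cset (insert p S) a b = cset S a b - (\<lambda>m. int p * m) ` cset S (a / p) (b / p)"
    and "(\<lambda>m. int p * m) ` cset S (a / p) (b / p) \<subseteq> cset S a b"
    and "card ((\<lambda>m. int p * m) ` cset S (a / p) (b / p)) = card (cset S (a / p) (b / p))"
proof -
  have p0: "real p > 0" using assms(1) prime_gt_0_nat by simp
  have key: "\<And>m. (\<forall>s\<in>S. \<not> int s dvd int p * m) \<longleftrightarrow> (\<forall>s\<in>S. \<not> int s dvd m)"
  proof -
    fix m
    have "\<And>s. s \<in> S \<Longrightarrow> int s dvd int p * m \<Longrightarrow> int s dvd m"
    proof -
      fix s assume s: "s \<in> S" "int s dvd int p * m"
      have ps: "prime (int s)" using assms(3) s(1) by simp
      have "\<not> int s dvd int p"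
      proof
        assume "int s dvd int p"
        then have "s dvd p" by simp
        then have "s = 1 \<or> s = p" using assms(1) by (simp add: prime_nat_iff)
        moreover have "prime s" using assms(3) s(1) by simp
        ultimately have "s = p" by auto
        then show False using s(1) assms(2) by simp
      qed
      then show "int s dvd m" using s(2) ps prime_dvd_mult_iff by blast
    qed
    then show "(\<forall>s\<in>S. \<not> int s dvd int p * m) \<longleftrightarrow> (\<forall>s\<in>S. \<not> int s dvd m)" by auto
  qed
  have img: "(\<lambda>m. int p * m) ` cset S (a / p) (b / p) = {n \<in> cset S a b. int p dvd n}"
  proof (rule set_eqI, rule iffI)
    fix n assume "n \<in> (\<lambda>m. int p * m) ` cset S (a / p) (b / p)"
    then obtain m where m: "n = int p * m" "m \<in> cset S (a / p) (b / p)" by blast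
    then show "n \<in> {n \<in> cset S a b. int p dvd n}" using p0 key unfolding cset_def
      by (auto simp: field_simps)
  next
    fix n assume n: "n \<in> {n \<in> cset S a b. int p dvd n}"
    then obtain m where m: "n = int p * m" by auto
    then have "m \<in> cset S (a / p) (b / p)" using n p0 key unfolding cset_def
      by (auto simp: field_simps)
    then show "n \<in> (\<lambda>m. int p * m) ` cset S (a / p) (b / p)" using m by blast
  qed
  show "cset (insert p S) a b = cset S a b - (\<lambda>m. int p * m) ` cset S (a / p) (b / p)"
    unfolding img unfolding cset_def by auto
  show "(\<lambda>m. int p * m) ` cset S (a / p) (b / p) \<subseteq> cset S a b" unfolding img by auto
  show "card ((\<lambda>m. int p * m) ` cset S (a / p) (b / p)) = card (cset S (a / p) (b / p))"
    by (rule card_image) (use p0 in \<open>auto simp: inj_on_def\<close>)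
qed

lemma cset_bound:
  assumes "finite S" "\<forall>s\<in>S. prime s" "a \<le> b"
  shows "\<bar>real (card (cset S a b)) - (b - a) * (\<Prod>p\<in>S. 1 - 1 / real p)\<bar> \<le> 2 ^ card S"
  using assms
proof (induction S arbitrary: a b rule: finite_induct)
  case empty
  then show ?case using cset_empty by simp
next
  case (insert p S)
  have pp: "prime p" using insert by simp
  have p0: "real p > 0" using pp prime_gt_0_nat by simp
  have Sp: "\<forall>s\<in>S. prime s" using insert.prems by simp
  note ci = cset_insert[OF pp insert(2) Sp, of a b]
  have cle: "card (cset S (a/p) (b/p)) \<le> card (cset S a b)"
    using card_mono[OF cset_finite ci(2)] ci(3) by simp
  have c: "real (card (cset (insert p S) a b)) = real (card (cset S a b)) - real (card (cset S (a/p) (b/p)))"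
    using ci card_Diff_subset[OF finite_imageI[OF cset_finite] ci(2)]
    using cle by (simp add: of_nat_diff)
  have ab': "a / p \<le> b / p" using insert(5) p0 by (simp add: divide_right_mono)
  have i1: "\<bar>real (card (cset S a b)) - (b - a) * (\<Prod>p\<in>S. 1 - 1 / real p)\<bar> \<le> 2 ^ card S"
    using insert by simp
  have i2: "\<bar>real (card (cset S (a/p) (b/p))) - (b/p - a/p) * (\<Prod>p\<in>S. 1 - 1 / real p)\<bar> \<le> 2 ^ card S"
    using insert ab' by simp
  have e: "(b - a) * (\<Prod>p\<in>insert p S. 1 - 1 / real p) = (b - a) * (\<Prod>p\<in>S. 1 - 1 / real p) - (b/p - a/p) * (\<Prod>p\<in>S. 1 - 1 / real p)"
    using insert(1,2) p0 by (simp add: field_simps)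
  show ?case unfolding c e using i1 i2 insert(1,2) by simp
qed

lemma prod_sq_aux:
  assumes "finite S" "\<forall>p\<in>S. p \<ge> (2::nat)"
  shows "9 ^ card (S \<inter> {2..5}) * (\<Prod>p\<in>S. (real p - 1)^2) \<ge> 4 ^ card S * (\<Prod>p\<in>S. real p)"
  using assms
proof (induction S rule: finite_induct)
  case empty then show ?case by simp
next
  case (insert p S)
  have IH: "9 ^ card (S \<inter> {2..5}) * (\<Prod>p\<in>S. (real p - 1)^2) \<ge> 4 ^ card S * (\<Prod>p\<in>S. real p)"
    using insert by simp
  have nn: "0 \<le> 4 ^ card S * (\<Prod>p\<in>S. real p)" by (simp add: prod_nonneg)
  show ?case
  proof (cases "p \<le> 5")
    case True
    have p2: "p \<ge> 2" using insert by simp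
    have "9 * (real p - 1)^2 \<ge> 4 * real p"
    proof -
      have "p = 2 \<or> p = 3 \<or> p = 4 \<or> p = 5" using True p2 by auto
      then show ?thesis by (auto simp: power2_eq_square)
    qed
    moreover have "card (insert p S \<inter> {2..5}) = Suc (card (S \<inter> {2..5}))"
      using True p2 insert(1,2) by (simp add: Int_insert_left)
    ultimately have "9 ^ card (insert p S \<inter> {2..5}) * (\<Prod>p\<in>insert p S. (real p - 1)^2)
        = (9 * (real p - 1)^2) * (9 ^ card (S \<inter> {2..5}) * (\<Prod>p\<in>S. (real p - 1)^2))"
      using insert(1,2) by simp
    also have "\<dots> \<ge> (4 * real p) * (4 ^ card S * (\<Prod>p\<in>S. real p))"
      by (rule mult_mono) (use IH \<open>9 * (real p - 1)^2 \<ge> 4 * real p\<close> nn in auto)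
    finally show ?thesis using insert(1,2) by (simp add: algebra_simps)
  next
    case False
    have "(real p - 1)^2 \<ge> 4 * real p"
    proof -
      have "real p \<ge> 6" using False by simp
      then have "(real p - 1)^2 - 4 * real p = (real p - 6) * real p + (1 :: real)"
        by (simp add: power2_eq_square algebra_simps)
      moreover have "(real p - 6) * real p \<ge> 0" using \<open>real p \<ge> 6\<close> by simp
      ultimately show ?thesis by linarith
    qed
    moreover have "insert p S \<inter> {2..5} = S \<inter> {2..5}" using False by auto
    ultimately have "9 ^ card (insert p S \<inter> {2..5}) * (\<Prod>p\<in>insert p S. (real p - 1)^2)
        = ((real p - 1)^2) * (9 ^ card (S \<inter> {2..5}) * (\<Prod>p\<in>S. (real p - 1)^2))"
      using insert(1,2) by simp
    also have "\<dots> \<ge> (4 * real p) * (4 ^ card S * (\<Prod>p\<in>S. real p))"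
      by (rule mult_mono) (use IH \<open>(real p - 1)^2 \<ge> 4 * real p\<close> nn in auto)
    finally show ?thesis using insert(1,2) by (simp add: algebra_simps)
  qed
qed

lemma prod_sq:
  assumes "finite S" "\<forall>p\<in>S. p \<ge> (2::nat)"
  shows "6561 * (\<Prod>p\<in>S. (real p - 1)^2) \<ge> 4 ^ card S * (\<Prod>p\<in>S. real p)"
proof -
  have "card (S \<inter> {2..5}) \<le> card {2..5::nat}" by (rule card_mono) auto
  then have "card (S \<inter> {2..5}) \<le> 4" by simp
  then have "(9::real) ^ card (S \<inter> {2..5}) \<le> 9 ^ 4" by (rule power_increasing) simp
  then have "9 ^ card (S \<inter> {2..5}) * (\<Prod>p\<in>S. (real p - 1)^2) \<le> 6561 * (\<Prod>p\<in>S. (real p - 1)^2)"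
    by (intro mult_right_mono) (auto simp: prod_nonneg)
  with prod_sq_aux[OF assms] show ?thesis by linarith
qed



lemma coprime_from_pf:
  assumes "q > 0" "\<forall>p\<in>prime_factors q. \<not> int p dvd n"
  shows "coprime n (int q)"
proof (rule ccontr)
  assume nc: "\<not> coprime n (int q)"
  define g where "g = gcd n (int q)"
  have g0: "g \<ge> 0" unfolding g_def by simp
  have "g \<noteq> 1" using nc unfolding g_def by (simp add: coprime_iff_gcd_eq_1)
  then have "nat g \<noteq> 1" using g0 by auto
  then obtain P where P: "prime P" "P dvd nat g" using prime_factor_nat by blast
  then have "int P dvd int (nat g)" by (simp only: int_dvd_int_iff)
  then have "int P dvd g" using g0 by simp
  then have "int P dvd n" "int P dvd int q" unfolding g_def by auto
  then have "P \<in> prime_factors q" using P(1) assms(1) by (simp add: in_prime_factors_iff)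
  with assms(2) \<open>int P dvd n\<close> show False by blast
qed

lemma prod_pf_le:
  assumes "q > (0::nat)"
  shows "(\<Prod>p\<in>prime_factors q. real p) \<le> real q"
proof -
  have "(\<Prod>p\<in>prime_factors q. p ^ multiplicity p q) = normalize q"
    using prod_prime_factors[of q] assms by blast
  then have h: "(\<Prod>p\<in>prime_factors q. p ^ multiplicity p q) = q" by simp
  have eq: "(\<Prod>p\<in>prime_factors q. real p ^ multiplicity p q) = real q"
  proof -
    have "(\<Prod>p\<in>prime_factors q. real p ^ multiplicity p q) = (\<Prod>p\<in>prime_factors q. real (p ^ multiplicity p q))"
      by simp
    also have "\<dots> = real (\<Prod>p\<in>prime_factors q. p ^ multiplicity p q)" by (rule of_nat_prod[symmetric])
    also have "\<dots> = real q" using h by simp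
    finally show ?thesis .
  qed
  have "(\<Prod>p\<in>prime_factors q. real p) \<le> (\<Prod>p\<in>prime_factors q. real p ^ multiplicity p q)"
  proof (rule prod_mono)
    fix p assume p: "p \<in> prime_factors q"
    then have "prime p" "p dvd q" by (auto simp: in_prime_factors_iff)
    then have m: "multiplicity p q \<ge> 1" using assms
      by (simp add: Suc_le_eq prime_multiplicity_gt_zero_iff)
    have "real p \<ge> 1" using \<open>prime p\<close> prime_ge_1_nat by simp
    then show "0 \<le> real p \<and> real p \<le> real p ^ multiplicity p q"
      using m by (simp add: self_le_power)
  qed
  with eq show ?thesis by simp
qed



lemma coprime_near:
  assumes e: "(e::real) > 0"
  shows "\<exists>N. \<forall>q\<ge>N. \<forall>y::real. \<exists>p::int. coprime p (int q) \<and> \<bar>p / q - y\<bar> < e"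
proof (rule exI, intro allI impI)
  fix q :: nat and y :: real
  assume qN: "q \<ge> nat \<lceil>6561 / e^2\<rceil> + 1"
  have qbig: "real q > 6561 / e^2" using qN by linarith
  have q0: "q > 0" using qN by simp
  define S where "S = prime_factors q"
  have Sf: "finite S" and Sp: "\<forall>s\<in>S. prime s" unfolding S_def by auto
  have S2: "\<forall>s\<in>S. s \<ge> 2" using Sp prime_ge_2_nat by blast
  define R where "R = (\<Prod>p\<in>S. real p)"
  define Pm where "Pm = (\<Prod>p\<in>S. real p - 1)"
  define pi where "pi = (\<Prod>p\<in>S. 1 - 1 / real p)"
  have R0: "R > 0" unfolding R_def using S2 by (intro prod_pos) auto
  have Rq: "R \<le> real q" unfolding R_def S_def using prod_pf_le[OF q0] .
  have Pm0: "Pm \<ge> 0" unfolding Pm_def using S2 by (intro prod_nonneg) auto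
  have pieq: "pi = Pm / R"
  proof -
    have "pi = (\<Prod>p\<in>S. (real p - 1) / real p)" unfolding pi_def
      using S2 by (intro prod.cong) (auto simp: field_simps)
    also have "\<dots> = Pm / R" unfolding Pm_def R_def by (rule prod_dividef)
    finally show ?thesis .
  qed
  have Pm2: "6561 * Pm^2 \<ge> 4 ^ card S * R"
    using prod_sq[OF Sf S2] unfolding Pm_def R_def by (simp add: power_mult_distrib prod_power_distrib)
  define X where "X = e * q * pi"
  have X0: "X \<ge> 0" unfolding X_def pieq using e Pm0 R0 by simp
  have "X^2 = e^2 * q^2 * Pm^2 / R^2" unfolding X_def pieq by (simp add: power_mult_distrib power_divide)
  also have "\<dots> \<ge> e^2 * q^2 * (4 ^ card S * R / 6561) / R^2"
    using Pm2 e R0 by (intro divide_right_mono mult_left_mono) auto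
  finally have "X^2 \<ge> e^2 * q^2 * 4 ^ card S / (6561 * R)" using R0 by (simp add: power2_eq_square field_simps)
  moreover have "e^2 * q^2 * 4 ^ card S / (6561 * R) \<ge> e^2 * q * 4 ^ card S / 6561"
  proof -
    have "e^2 * q * 4 ^ card S / 6561 = e^2 * q * 4 ^ card S * R / (6561 * R)" using R0 by simp
    also have "\<dots> \<le> e^2 * q * 4 ^ card S * q / (6561 * R)"
      using Rq R0 e by (intro divide_right_mono mult_left_mono) auto
    finally show ?thesis by (simp add: power2_eq_square algebra_simps)
  qed
  moreover have "e^2 * q * 4 ^ card S / 6561 > 4 ^ card S"
  proof -
    have "e^2 * q > 6561" using qbig e by (simp add: field_simps)
    then have "e^2 * q * 4 ^ card S > 6561 * 4 ^ card S" by simp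
    then show ?thesis by simp
  qed
  moreover have "((2::real) ^ card S)^2 = 4 ^ card S"
    by (simp add: power2_eq_square power_mult_distrib[symmetric])
  ultimately have "X^2 > (2 ^ card S)^2" by linarith
  then have Xb: "X > 2 ^ card S" using X0 by (meson power_less_imp_less_base)
  define a where "a = q * (y - e/2)"
  define b where "b = q * (y + e/2)"
  have ab: "a \<le> b" and bma: "b - a = e * q" unfolding a_def b_def using e by (auto simp: algebra_simps)
  have "\<bar>real (card (cset S a b)) - X\<bar> \<le> 2 ^ card S"
    using cset_bound[OF Sf Sp ab] unfolding bma X_def pi_def .
  then have "card (cset S a b) > 0" using Xb by linarith
  then obtain n where n: "n \<in> cset S a b" by (metis card_gt_0_iff ex_in_conv)
  then have na: "a < n" "n \<le> b" and nS: "\<forall>p\<in>S. \<not> int p dvd n" unfolding cset_def by auto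
  have cop: "coprime n (int q)" using coprime_from_pf[OF q0] nS unfolding S_def by blast
  have "\<bar>n / q - y\<bar> \<le> e / 2"
  proof -
    have "q * (y - e/2) < n" "n \<le> q * (y + e/2)" using na unfolding a_def b_def by auto
    then have "y - e/2 < n / q" "n / q \<le> y + e/2" using q0 by (auto simp: field_simps)
    then show ?thesis by linarith
  qed
  then show "\<exists>p::int. coprime p (int q) \<and> \<bar>p / q - y\<bar> < e" using cop e
    by (intro exI[of _ n]) auto
qed



theorem lemma6p2:
  fixes \<beta> :: real and f :: "real \<Rightarrow> real" and l :: "nat \<Rightarrow> nat"
  assumes "\<beta> \<notin> \<rat>"
    and "periodic1 f" and "real_analytic f" and "\<not> trig_poly f"
    and "\<forall>k\<ge>1. 0 < l k" and "\<forall>k\<ge>1. l k < l (Suc k)"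
    and "\<forall>k\<ge>1. fourier_coeff f (int (l k)) \<noteq> 0"
    and "filterlim (\<lambda>k. norm (fourier_coeff f (int (l k))) / T_sum f (l k)) at_top sequentially"
  shows "\<forall>M\<ge>1. closure (\<Union>j\<in>{M..}. U_set \<beta> f l j) = UNIV"
proof (intro allI impI)
  fix M :: nat assume M1: "M \<ge> 1"
  have lgrow: "l (M + k) \<ge> k" for k
  proof (induction k)
    case 0 then show ?case by simp
  next
    case (Suc k)
    have "l (M + k) < l (Suc (M + k))" using assms(6) M1 by simp
    then show ?case using Suc by simp
  qed
  have "x \<in> closure (\<Union>j\<in>{M..}. U_set \<beta> f l j)" for x :: real
    unfolding closure_approachable
  proof (intro allI impI)
    fix e :: real assume e: "e > 0"
    obtain N where N: "\<forall>q\<ge>N. \<forall>y::real. \<exists>p::int. coprime p (int q) \<and> \<bar>p / q - y\<bar> < e / 2"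
      using coprime_near[of "e/2"] e by auto
    define j where "j = M + max N 2"
    have lj: "l j \<ge> max N 2" unfolding j_def using lgrow by blast
    obtain p :: int where p: "coprime p (int (l j))" "\<bar>p / l j - x\<bar> < e / 2"
      using N lj by fastforce
    define q where "q = int (l j)"
    have q2: "q \<ge> 2" unfolding q_def using lj by simp
    define k where "k = \<bar>p\<bar> + 1"
    define p' where "p' = p + k * q"
    have cop: "coprime p' q"
    proof -
      have q0: "q \<noteq> 0" using q2 by simp
      have m: "p' mod q = p mod q" unfolding p'_def by simp
      have "coprime p q" using p(1) unfolding q_def .
      then have "coprime (p mod q) q" using coprime_mod_left_iff[OF q0] by blast
      then have "coprime (p' mod q) q" using m by simp
      then show ?thesis using coprime_mod_left_iff[OF q0] by blast
    qed
    have qp: "q \<le> p'"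
    proof -
      have "\<bar>p\<bar> * q \<ge> \<bar>p\<bar>" using q2 by (simp add: mult_le_cancel_left1)
      then show ?thesis unfolding p'_def k_def by (simp add: algebra_simps)
    qed
    define B where "B = (\<lambda>n. 2 * real_of_int (cf_den \<beta> (eta \<beta> f l j)) * (real n)^2)"
    obtain \<alpha> n where a: "\<alpha> \<notin> \<rat>" "cf_den \<alpha> n = q" "of_int (cf_den \<alpha> (Suc n)) > B n"
       "\<bar>\<alpha> - p' / q\<bar> < e / 2"
      using C_lemma[OF cop _ qp, of "e/2" B] q2 e by auto
    define \<alpha>' where "\<alpha>' = \<alpha> + of_int (- k)"
    have den: "cf_den \<alpha>' m = cf_den \<alpha> m" for m unfolding \<alpha>'_def by (rule den_int_shift)
    have irr: "\<alpha>' \<notin> \<rat>" unfolding \<alpha>'_def using a(1)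
      by (metis Rats_diff Rats_of_int add_diff_cancel_right')
    have n1: "n \<ge> 1" using a(2) q2 by (cases n) auto
    have "\<alpha>' \<in> V_set \<beta> f l n j" unfolding V_set_def
      using irr den a(2,3) unfolding B_def q_def by simp
    then have inU: "\<alpha>' \<in> (\<Union>j\<in>{M..}. U_set \<beta> f l j)"
      unfolding U_set_def j_def using n1 by auto
    have "\<alpha>' - x = (\<alpha> - p' / q) + (p / q - x)"
      unfolding \<alpha>'_def p'_def using q2 by (simp add: field_simps)
    then have "dist \<alpha>' x < e" using a(4) p(2) unfolding dist_real_def q_def by linarith
    then show "\<exists>y\<in>(\<Union>j\<in>{M..}. U_set \<beta> f l j). dist y x < e" using inU by blast
  qed
  then show "closure (\<Union>j\<in>{M..}. U_set \<beta> f l j) = UNIV" by auto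
qed

end
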